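(* The $R_5$-submodules $U',U'',U''',U''''$ and $U$ of $H_5$ are stable under $\Phi$, i.e. $\Phi(X)\subseteq X$ for each of them.
   Context: Let $B_3=\langle s_1,s_2\mid s_1s_2s_1=s_2s_1s_2\rangle$, $R_5=\mathbb{Z}[a,b,c,d,e,e^{-1}]$, and let $H_5$ be the quotient of the group algebra $R_5B_3$ by the relations $s_i^5=as_i^4+bs_i^3+cs_i^2+ds_i+e$ for $i=1,2$; identify $s_i$ with their images. Let $\Phi$ be the ring (i.e. $\mathbb{Z}$-algebra) automorphism of $H_5$ determined by $s_i\mapsto s_i^{-1}$ ($i=1,2$), $a\mapsto -e^{-1}d$, $b\mapsto -e^{-1}c$, $c\mapsto -e^{-1}b$, $d\mapsto -e^{-1}a$, $e\mapsto e^{-1}$. For $i=1,2$ let $u_i$ be the $R_5$-subalgebra of $H_5$ generated by $s_i$. Set $\omega=s_2s_1^2s_2$. For $R_5$-submodules (or elements) $X_1,\dots,X_n$, $X_1\cdots X_n$ denotes the $R_5$-submodule spanned by products $x_1\cdots x_n$, $x_j\in X_j$; sums are sums of submodules. Define $U'=u_1u_2u_1+u_1\omega+u_1\omega^{-1}+u_1s_2^{-1}s_1^2s_2^{-1}u_1+u_1s_2s_1^{-2}s_2u_1+u_1s_2^2s_1^2s_2^2u_1+u_1s_2^{-2}s_1^{-2}s_2^{-2}u_1+u_1s_2s_1^{-2}s_2^2u_1+u_1s_2^{-1}s_1^2s_2^{-2}u_1+u_1s_2^{-1}s_1s_2^{-1}u_1+u_1s_2s_1^{-1}s_2u_1+u_1s_2^{-2}s_1^{-2}s_2^2u_1+u_1s_2^2s_1^2s_2^{-2}u_1+u_1s_2^2s_1^{-2}s_2^2u_1+u_1s_2^{-2}s_1^2s_2^{-2}u_1+u_1s_2^{-2}s_1s_2^{-1}u_1+u_1s_2^{-1}s_1s_2^{-2}u_1$;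 $U''=U'+u_1\omega^2+u_1\omega^{-2}+u_1s_2^{-2}s_1^2s_2^{-1}s_1s_2^{-1}u_1+u_1s_2^2s_1^{-2}s_2s_1^{-1}s_2u_1+u_1s_2s_1^{-2}s_2^2s_1^{-2}s_2^2u_1+u_1s_2^{-1}s_1^2s_2^{-2}s_1^2s_2^{-2}u_1$; $U'''=U''+u_1\omega^3+u_1\omega^{-3}$; $U''''=U'''+u_1\omega^4+u_1\omega^{-4}$; $U=U''''+u_1\omega^5+u_1\omega^{-5}$. *)

theory Defs
  imports Main "HOL-Library.Poly_Mapping" "HOL-Library.Product_Plus"
begin

section \<open>The coefficient ring R5 = Z[a,b,c,d,e,e^-1]\<close>

text \<open>Laurent-type polynomials: a monomial a^i b^j c^k d^l e^n is encoded by its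
  exponent vector (i,j,k,l,n) with i,j,k,l natural and n an integer.\<close>

type_synonym R5 = "(nat \<times> nat \<times> nat \<times> nat \<times> int) \<Rightarrow>\<^sub>0 int"

definition pa :: R5 where "pa = Poly_Mapping.single (1,0,0,0,0) 1"
definition pb :: R5 where "pb = Poly_Mapping.single (0,1,0,0,0) 1"
definition pc :: R5 where "pc = Poly_Mapping.single (0,0,1,0,0) 1"
definition pd :: R5 where "pd = Poly_Mapping.single (0,0,0,1,0) 1"
definition pe :: R5 where "pe = Poly_Mapping.single (0,0,0,0,1) 1"
definition pe_inv :: R5 where "pe_inv = Poly_Mapping.single (0,0,0,0,-1) 1"

definition phi_mono :: "nat \<times> nat \<times> nat \<times> nat \<times> int \<Rightarrow> R5" where
  "phi_mono m = (case m of (i,j,k,l,n) \<Rightarrow>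
      (- pe_inv * pd) ^ i * (- pe_inv * pc) ^ j * (- pe_inv * pb) ^ k * (- pe_inv * pa) ^ l
      * Poly_Mapping.single (0,0,0,0,-n) 1)"

definition phiR :: "R5 \<Rightarrow> R5" where
  "phiR p = (\<Sum>m\<in>Poly_Mapping.keys p. of_int (Poly_Mapping.lookup p m) * phi_mono m)"

datatype letter = S1 | S1i | S2 | S2i

datatype fw = FW "letter list"

instantiation fw :: monoid_add
begin
definition zero_fw :: fw where "zero_fw = FW []"
fun plus_fw :: "fw \<Rightarrow> fw \<Rightarrow> fw" where "plus_fw (FW x) (FW y) = FW (x @ y)"
instance
proof
  fix a b c :: fw
  show "a + b + c = a + (b + c)" by (cases a; cases b; cases c) simp
  show "0 + a = a" by (cases a) (simp add: zero_fw_def)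
  show "a + 0 = a" by (cases a) (simp add: zero_fw_def)
qed
end

text \<open>Free algebra: finitely supported R5-linear combinations of words,
  multiplication = concatenation of words.\<close>
type_synonym F = "fw \<Rightarrow>\<^sub>0 R5"

definition gen :: "letter \<Rightarrow> F" where "gen l = Poly_Mapping.single (FW [l]) 1"

definition s1 :: F where "s1 = gen S1"
definition s1i :: F where "s1i = gen S1i"
definition s2 :: F where "s2 = gen S2"
definition s2i :: F where "s2i = gen S2i"

definition scal :: "R5 \<Rightarrow> F" where "scal r = Poly_Mapping.single 0 r"

definition rspan :: "F set \<Rightarrow> F set" where
  "rspan S = {x. \<exists>T f. finite T \<and> T \<subseteq> S \<and> x = (\<Sum>t\<in>T. scal (f t) * t)}"

definition msum2 :: "F set \<Rightarrow> F set \<Rightarrow> F set" where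
  "msum2 A B = {x + y | x y. x \<in> A \<and> y \<in> B}"

definition msum :: "F set list \<Rightarrow> F set" where
  "msum Xs = foldr msum2 Xs {0}"

definition mprod :: "F set list \<Rightarrow> F set" where
  "mprod Xs = rspan {prod_list xs | xs. list_all2 (\<lambda>x X. x \<in> X) xs Xs}"

section \<open>H5 = R5 B3 / (quintic relations), as F modulo a two-sided ideal\<close>

definition quintic :: "F \<Rightarrow> F" where
  "quintic s = s ^ 5 - (scal pa * s ^ 4 + scal pb * s ^ 3 + scal pc * s ^ 2 + scal pd * s + scal pe)"

definition rels :: "F set" where
  "rels = {s1 * s1i - 1, s1i * s1 - 1, s2 * s2i - 1, s2i * s2 - 1,
           s1 * s2 * s1 - s2 * s1 * s2, quintic s1, quintic s2}"

text \<open>The two-sided ideal generated by the relations; F / Irel is H5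
  (the first five relations present the group algebra R5 B3).\<close>
definition Irel :: "F set" where
  "Irel = rspan {x * r * y | x r y. r \<in> rels}"

text \<open>An R5-submodule of H5 is represented by its full preimage in F:
  the image of X in H5 has preimage X + Irel.\<close>
definition preim :: "F set \<Rightarrow> F set" where
  "preim X = msum2 X Irel"

fun swapl :: "letter \<Rightarrow> letter" where
  "swapl S1 = S1i" | "swapl S1i = S1" | "swapl S2 = S2i" | "swapl S2i = S2"

fun PhiW :: "fw \<Rightarrow> F" where
  "PhiW (FW ws) = prod_list (map (\<lambda>l. gen (swapl l)) ws)"

definition PhiF :: "F \<Rightarrow> F" where
  "PhiF x = (\<Sum>w\<in>Poly_Mapping.keys x. scal (phiR (Poly_Mapping.lookup x w)) * PhiW w)"

definition Phi_stable :: "F set \<Rightarrow> bool" where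
  "Phi_stable X \<longleftrightarrow> PhiF ` preim X \<subseteq> preim X"

section \<open>The submodules U', U'', U''', U'''', U\<close>

definition u1 :: "F set" where "u1 = rspan (range (\<lambda>k::nat. s1 ^ k))"
definition u2 :: "F set" where "u2 = rspan (range (\<lambda>k::nat. s2 ^ k))"

definition omega :: F where "omega = s2 * s1 ^ 2 * s2"
definition omega_inv :: F where "omega_inv = s2i * s1i ^ 2 * s2i"

definition mid :: "F \<Rightarrow> F set" where "mid w = mprod [u1, {w}, u1]"

definition U1_list :: "F set list" where
  "U1_list =
    [ mprod [u1, u2, u1],
      mprod [u1, {omega}],
      mprod [u1, {omega_inv}],
      mid (s2i * s1 ^ 2 * s2i),
      mid (s2 * s1i ^ 2 * s2),
      mid (s2 ^ 2 * s1 ^ 2 * s2 ^ 2),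
      mid (s2i ^ 2 * s1i ^ 2 * s2i ^ 2),
      mid (s2 * s1i ^ 2 * s2 ^ 2),
      mid (s2i * s1 ^ 2 * s2i ^ 2),
      mid (s2i * s1 * s2i),
      mid (s2 * s1i * s2),
      mid (s2i ^ 2 * s1i ^ 2 * s2 ^ 2),
      mid (s2 ^ 2 * s1 ^ 2 * s2i ^ 2),
      mid (s2 ^ 2 * s1i ^ 2 * s2 ^ 2),
      mid (s2i ^ 2 * s1 ^ 2 * s2i ^ 2),
      mid (s2i ^ 2 * s1 * s2i),
      mid (s2i * s1 * s2i ^ 2) ]"

definition U2_list :: "F set list" where
  "U2_list = U1_list @
    [ mprod [u1, {omega ^ 2}],
      mprod [u1, {omega_inv ^ 2}],
      mid (s2i ^ 2 * s1 ^ 2 * s2i * s1 * s2i),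
      mid (s2 ^ 2 * s1i ^ 2 * s2 * s1i * s2),
      mid (s2 * s1i ^ 2 * s2 ^ 2 * s1i ^ 2 * s2 ^ 2),
      mid (s2i * s1 ^ 2 * s2i ^ 2 * s1 ^ 2 * s2i ^ 2) ]"

definition U3_list :: "F set list" where
  "U3_list = U2_list @ [mprod [u1, {omega ^ 3}], mprod [u1, {omega_inv ^ 3}]]"

definition U4_list :: "F set list" where
  "U4_list = U3_list @ [mprod [u1, {omega ^ 4}], mprod [u1, {omega_inv ^ 4}]]"

definition U5_list :: "F set list" where
  "U5_list = U4_list @ [mprod [u1, {omega ^ 5}], mprod [u1, {omega_inv ^ 5}]]"

definition U1 :: "F set" where "U1 = msum U1_list"
definition U2 :: "F set" where "U2 = msum U2_list"
definition U3 :: "F set" where "U3 = msum U3_list"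
definition U4 :: "F set" where "U4 = msum U4_list"
definition U5 :: "F set" where "U5 = msum U5_list"

end

theory Submission
  imports Defs
begin


lemma pm_induct[case_names zero add]:
  assumes "P 0" and "\<And>f a b. P f \<Longrightarrow> P (f + Poly_Mapping.single a b)"
  shows "P x"
proof (induct x rule: Poly_Mapping.update_induct)
  case const then show ?case using assms(1) by simp
next
  case (update f a b)
  have "Poly_Mapping.update a b f = f + Poly_Mapping.single a b"
    using update(1) by (intro poly_mapping_eqI) (auto simp: lookup_update lookup_add lookup_single when_def in_keys_iff)
  then show ?case using assms(2) update(3) by simp
qed

lemma scal_mult: "scal (r*s) = scal r * scal s"
  by (simp add: scal_def mult_single)
lemma scal_add: "scal (r+s) = scal r + scal s"
  by (simp add: scal_def single_add)
lemma scal_1[simp]: "scal 1 = 1" by (simp add: scal_def)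
lemma scal_0[simp]: "scal 0 = 0" by (simp add: scal_def)
lemma scal_uminus: "scal (-r) = - scal r" by (simp add: scal_def single_uminus)
lemma scal_diff: "scal (r-s) = scal r - scal s" by (simp add: scal_def single_diff)

lemma scal_comm: "scal r * x = x * scal r"
proof (induct x rule: pm_induct)
  case zero then show ?case by simp
next
  case (add f a b)
  have "scal r * Poly_Mapping.single a b = Poly_Mapping.single a b * scal r"
    unfolding scal_def mult_single by (simp only: add_0_left add_0_right mult.commute)
  then show ?case using add by (simp only: distrib_left distrib_right)
qed

lemma scal_left_commute: "scal r * (x * y) = x * (scal r * y)"
proof -
  have "scal r * (x * y) = (scal r * x) * y" by (rule mult.assoc[symmetric])
  also have "\<dots> = (x * scal r) * y" by (simp only: scal_comm[of r x])
  also have "\<dots> = x * (scal r * y)" by (rule mult.assoc)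
  finally show ?thesis .
qed

lemma phiR_alt: "finite S \<Longrightarrow> Poly_Mapping.keys p \<subseteq> S \<Longrightarrow>
   phiR p = (\<Sum>m\<in>S. of_int (Poly_Mapping.lookup p m) * phi_mono m)"
  unfolding phiR_def
  by (rule sum.mono_neutral_left) (auto simp: in_keys_iff)

lemma phiR_add: "phiR (p + q) = phiR p + phiR q"
proof -
  let ?S = "Poly_Mapping.keys p \<union> Poly_Mapping.keys q"
  have "phiR (p+q) = (\<Sum>m\<in>?S. of_int (Poly_Mapping.lookup (p+q) m) * phi_mono m)"
    by (rule phiR_alt) (auto dest: subsetD[OF keys_add])
  also have "\<dots> = (\<Sum>m\<in>?S. of_int (Poly_Mapping.lookup p m) * phi_mono m) + (\<Sum>m\<in>?S. of_int (Poly_Mapping.lookup q m) * phi_mono m)"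
    by (simp add: lookup_add distrib_right sum.distrib)
  also have "\<dots> = phiR p + phiR q"
    by (subst (1 2) phiR_alt[symmetric]) auto
  finally show ?thesis .
qed

lemma phiR_0[simp]: "phiR 0 = 0" by (simp add: phiR_def)

lemma phiR_single: "phiR (Poly_Mapping.single m c) = of_int c * phi_mono m"
  by (subst phiR_alt[of "{m}"]) (auto simp: lookup_single)

lemma single_int_mult: "Poly_Mapping.single (0,0,0,0,x) 1 * Poly_Mapping.single (0,0,0,0,y) 1 = (Poly_Mapping.single (0,0,0,0,x+y) 1 :: R5)"
  by (simp add: mult_single)

lemma aux_pow5: "(A::'a::comm_monoid_mult)^(i+i') * B^(j+j') * C^(k+k') * D^(l+l') * (Y*Y') =
   (A^i * B^j * C^k * D^l * Y) * (A^i' * B^j' * C^k' * D^l' * Y')"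
  by (simp add: power_add mult_ac)

lemma phi_mono_add: "phi_mono (m + n) = phi_mono m * phi_mono n"
proof -
  obtain i j k l x where m: "m = (i,j,k,l,x)" by (cases m) auto
  obtain i' j' k' l' x' where n: "n = (i',j',k',l',x')" by (cases n) auto
  have e: "(i,j,k,l,x) + (i',j',k',l',x') = (i+i', j+j', k+k', l+l', x+x')" by simp
  have s: "Poly_Mapping.single (0,0,0,0,-(x+x')) 1 = (Poly_Mapping.single (0,0,0,0,-x) 1 * Poly_Mapping.single (0,0,0,0,-x') 1 :: R5)"
    by (simp add: single_int_mult)
  show ?thesis unfolding m n e phi_mono_def prod.case s by (rule aux_pow5)
qed

lemma single00[simp]: "Poly_Mapping.single (0,0,0,0,0) 1 = (1::R5)"
  by (simp add: zero_prod_def[symmetric])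

lemma phiR_mult: "phiR (p * q) = phiR p * phiR q"
proof (induct p rule: pm_induct)
  case zero then show ?case by simp
next
  case (add f a b)
  have "phiR (Poly_Mapping.single a b * q) = phiR (Poly_Mapping.single a b) * phiR q"
  proof (induct q rule: pm_induct)
    case zero then show ?case by simp
  next
    case (add g c d)
    have "phiR (Poly_Mapping.single a b * Poly_Mapping.single c d) = phiR (Poly_Mapping.single a b) * phiR (Poly_Mapping.single c d)"
      unfolding mult_single phiR_single phi_mono_add by (simp only: of_int_mult mult_ac)
    then show ?case using add by (simp only: distrib_left phiR_add)
  qed
  then show ?case using add by (simp only: distrib_right phiR_add)
qed

lemma zero_tuple: "(0::nat\<times>nat\<times>nat\<times>nat\<times>int) = (0,0,0,0,0)"
  by (simp add: zero_prod_def)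

lemma phi_mono_0: "phi_mono 0 = 1"
  by (simp add: phi_mono_def zero_tuple)

lemma phiR_1[simp]: "phiR 1 = 1"
  by (metis single_one phiR_single phi_mono_0 of_int_1 mult_1)

lemma phiR_uminus: "phiR (-p) = - phiR p"
  by (metis add_eq_0_iff phiR_add phiR_0 add.commute add_right_cancel add.right_inverse)

lemma pe_inv_pe: "pe_inv * pe = 1"
  by (simp add: pe_inv_def pe_def mult_single)

lemmas phi_simps = power_one_right power_0 mult_1_right mult_1_left minus_zero single00 of_int_1

lemma phiR_pa: "phiR pa = - pe_inv * pd"
  unfolding pa_def phiR_single phi_mono_def prod.case by (simp only: phi_simps)
lemma phiR_pb: "phiR pb = - pe_inv * pc"
  unfolding pb_def phiR_single phi_mono_def prod.case by (simp only: phi_simps)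
lemma phiR_pc: "phiR pc = - pe_inv * pb"
  unfolding pc_def phiR_single phi_mono_def prod.case by (simp only: phi_simps)
lemma phiR_pd: "phiR pd = - pe_inv * pa"
  unfolding pd_def phiR_single phi_mono_def prod.case by (simp only: phi_simps)
lemma phiR_pe: "phiR pe = pe_inv"
  unfolding pe_def phiR_single phi_mono_def prod.case pe_inv_def by (simp only: phi_simps)
lemma phiR_pe_inv: "phiR pe_inv = pe"
  unfolding pe_inv_def phiR_single phi_mono_def prod.case pe_def by (simp only: phi_simps minus_minus)



lemma PhiF_alt: "finite S \<Longrightarrow> Poly_Mapping.keys x \<subseteq> S \<Longrightarrow>
   PhiF x = (\<Sum>w\<in>S. scal (phiR (Poly_Mapping.lookup x w)) * PhiW w)"
  unfolding PhiF_def by (rule sum.mono_neutral_left) (auto simp: in_keys_iff)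

lemma PhiF_add: "PhiF (x + y) = PhiF x + PhiF y"
proof -
  let ?S = "Poly_Mapping.keys x \<union> Poly_Mapping.keys y"
  have "PhiF (x+y) = (\<Sum>w\<in>?S. scal (phiR (Poly_Mapping.lookup (x+y) w)) * PhiW w)"
    by (rule PhiF_alt) (auto dest: subsetD[OF keys_add])
  also have "\<dots> = (\<Sum>w\<in>?S. scal (phiR (Poly_Mapping.lookup x w)) * PhiW w) + (\<Sum>w\<in>?S. scal (phiR (Poly_Mapping.lookup y w)) * PhiW w)"
    by (simp add: lookup_add phiR_add scal_add distrib_right sum.distrib)
  also have "\<dots> = PhiF x + PhiF y"
    by (subst (1 2) PhiF_alt[symmetric]) auto
  finally show ?thesis .
qed

lemma PhiF_0[simp]: "PhiF 0 = 0" by (simp add: PhiF_def)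

lemma PhiF_single: "PhiF (Poly_Mapping.single w r) = scal (phiR r) * PhiW w"
  by (subst PhiF_alt[of "{w}"]) (auto simp: lookup_single)

lemma PhiW_plus: "PhiW (w + v) = PhiW w * PhiW v"
  by (cases w; cases v) simp

lemma PhiF_mult: "PhiF (x * y) = PhiF x * PhiF y"
proof (induct x rule: pm_induct)
  case zero then show ?case by simp
next
  case (add f a b)
  have "PhiF (Poly_Mapping.single a b * y) = PhiF (Poly_Mapping.single a b) * PhiF y"
  proof (induct y rule: pm_induct)
    case zero then show ?case by simp
  next
    case (add g c d)
    have e: "scal (phiR b) * scal (phiR d) * (PhiW a * PhiW c) = scal (phiR b) * PhiW a * (scal (phiR d) * PhiW c)"
      by (simp only: mult.assoc scal_left_commute[of "phiR d" "PhiW a"])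
    have "PhiF (Poly_Mapping.single a b * Poly_Mapping.single c d) = PhiF (Poly_Mapping.single a b) * PhiF (Poly_Mapping.single c d)"
      unfolding mult_single PhiF_single phiR_mult scal_mult PhiW_plus by (rule e)
    then show ?case using add by (simp only: distrib_left PhiF_add)
  qed
  then show ?case using add by (simp only: distrib_right PhiF_add)
qed

lemma PhiW_0: "PhiW 0 = 1" by (simp add: zero_fw_def)

lemma PhiF_scal: "PhiF (scal r) = scal (phiR r)"
  by (simp add: scal_def PhiF_single PhiW_0)

lemma PhiF_1[simp]: "PhiF 1 = 1"
  using PhiF_scal[of 1] by simp

lemma PhiF_uminus: "PhiF (- x) = - PhiF x"
proof -
  have "PhiF x + PhiF (- x) = 0" by (simp only: PhiF_add[symmetric] add.right_inverse PhiF_0)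
  then show ?thesis by (rule minus_unique[symmetric])
qed

lemma PhiF_diff: "PhiF (x - y) = PhiF x - PhiF y"
  by (simp only: diff_conv_add_uminus PhiF_add PhiF_uminus)

lemma PhiF_power: "PhiF (x ^ n) = PhiF x ^ n"
  by (induct n) (simp_all add: PhiF_mult)

lemma PhiF_gen: "PhiF (gen l) = gen (swapl l)"
  by (simp add: gen_def PhiF_single)

lemma PhiF_s1[simp]: "PhiF s1 = s1i" by (simp add: s1_def s1i_def PhiF_gen)
lemma PhiF_s1i[simp]: "PhiF s1i = s1" by (simp add: s1_def s1i_def PhiF_gen)
lemma PhiF_s2[simp]: "PhiF s2 = s2i" by (simp add: s2_def s2i_def PhiF_gen)
lemma PhiF_s2i[simp]: "PhiF s2i = s2" by (simp add: s2_def s2i_def PhiF_gen)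

definition smod :: "F set \<Rightarrow> bool" where
  "smod W \<longleftrightarrow> 0 \<in> W \<and> (\<forall>x\<in>W. \<forall>y\<in>W. x + y \<in> W) \<and> (\<forall>r. \<forall>x\<in>W. scal r * x \<in> W)"

lemma smodD: assumes "smod W"
  shows "0 \<in> W" "x \<in> W \<Longrightarrow> y \<in> W \<Longrightarrow> x + y \<in> W" "x \<in> W \<Longrightarrow> scal r * x \<in> W"
  using assms unfolding smod_def by auto

lemma smod_uminus: "smod W \<Longrightarrow> x \<in> W \<Longrightarrow> - x \<in> W"
proof -
  assume "smod W" "x \<in> W"
  then have "scal (-1) * x \<in> W" by (rule smodD(3))
  then show "- x \<in> W" by (simp add: scal_uminus)
qed

lemma smod_diff: "smod W \<Longrightarrow> x \<in> W \<Longrightarrow> y \<in> W \<Longrightarrow> x - y \<in> W"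
  using smodD(2)[of W x "- y"] smod_uminus[of W y] by simp

lemma smod_sum: assumes "smod W" "finite T" "\<And>t. t \<in> T \<Longrightarrow> g t \<in> W" shows "sum g T \<in> W"
  using assms(2,3) by (induct T rule: finite_induct) (auto intro: smodD[OF assms(1)])

lemma rspan_induct[consumes 1, case_names zero add gen]:
  assumes x: "x \<in> rspan S" and z: "Q 0" and a: "\<And>a b. Q a \<Longrightarrow> Q b \<Longrightarrow> Q (a + b)"
    and g: "\<And>r t. t \<in> S \<Longrightarrow> Q (scal r * t)"
  shows "Q x"
proof -
  obtain T f where T: "finite T" "T \<subseteq> S" and xe: "x = (\<Sum>t\<in>T. scal (f t) * t)"
    using x unfolding rspan_def by blast
  have "T \<subseteq> S \<Longrightarrow> Q (\<Sum>t\<in>T. scal (f t) * t)" using T(1)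
    by (induct T rule: finite_induct) (auto intro: z a g)
  then show ?thesis using T xe by simp
qed

lemma rspan_gen: "t \<in> S \<Longrightarrow> t \<in> rspan S"
  unfolding rspan_def by (rule CollectI, rule exI[of _ "{t}"], rule exI[of _ "\<lambda>_. 1"]) simp

lemma rspan_0: "0 \<in> rspan S"
  unfolding rspan_def by (rule CollectI, rule exI[of _ "{}"]) simp

lemma rspan_add: assumes "x \<in> rspan S" "y \<in> rspan S" shows "x + y \<in> rspan S"
proof -
  obtain T1 f1 where 1: "finite T1" "T1 \<subseteq> S" "x = (\<Sum>t\<in>T1. scal (f1 t) * t)"
    using assms(1) unfolding rspan_def by blast
  obtain T2 f2 where 2: "finite T2" "T2 \<subseteq> S" "y = (\<Sum>t\<in>T2. scal (f2 t) * t)"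
    using assms(2) unfolding rspan_def by blast
  define g where "g t = (if t \<in> T1 then f1 t else 0) + (if t \<in> T2 then f2 t else 0)" for t
  have pt: "scal (g t) * t = (if t \<in> T1 then scal (f1 t) * t else 0) + (if t \<in> T2 then scal (f2 t) * t else 0)" for t
    by (simp add: g_def scal_add distrib_right)
  have "(\<Sum>t\<in>T1\<union>T2. scal (g t) * t) = (\<Sum>t\<in>T1\<union>T2. (if t \<in> T1 then scal (f1 t) * t else 0)) + (\<Sum>t\<in>T1\<union>T2. (if t \<in> T2 then scal (f2 t) * t else 0))"
    by (simp only: pt sum.distrib)
  also have "\<dots> = (\<Sum>t\<in>(T1\<union>T2)\<inter>T1. scal (f1 t) * t) + (\<Sum>t\<in>(T1\<union>T2)\<inter>T2. scal (f2 t) * t)"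
    using 1(1) 2(1) by (simp only: sum.inter_restrict[symmetric] finite_Un)
  also have "(T1\<union>T2)\<inter>T1 = T1" by blast
  also have "(T1\<union>T2)\<inter>T2 = T2" by blast
  also have "(\<Sum>t\<in>T1. scal (f1 t) * t) + (\<Sum>t\<in>T2. scal (f2 t) * t) = x + y"
    using 1 2 by simp
  finally have "x + y = (\<Sum>t\<in>T1\<union>T2. scal (g t) * t)" by simp
  moreover have "finite (T1 \<union> T2)" "T1 \<union> T2 \<subseteq> S" using 1 2 by auto
  ultimately show ?thesis unfolding rspan_def by (intro CollectI exI[of _ "T1 \<union> T2"] exI[of _ g]) simp
qed

lemma rspan_scal: assumes "x \<in> rspan S" shows "scal r * x \<in> rspan S"
proof -
  obtain T f where 1: "finite T" "T \<subseteq> S" "x = (\<Sum>t\<in>T. scal (f t) * t)"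
    using assms unfolding rspan_def by blast
  have "scal r * x = (\<Sum>t\<in>T. scal (r * f t) * t)"
    using 1 by (simp add: sum_distrib_left scal_mult mult.assoc)
  then show ?thesis using 1 unfolding rspan_def by (intro CollectI exI[of _ T] exI[of _ "\<lambda>t. r * f t"]) simp
qed

lemma smod_rspan: "smod (rspan S)"
  unfolding smod_def using rspan_0 rspan_add rspan_scal by blast

lemma rspan_least: assumes "smod W" "S \<subseteq> W" "x \<in> rspan S" shows "x \<in> W"
  using assms(3) by (induct rule: rspan_induct) (use assms(1,2) in \<open>auto intro: smodD\<close>)

section \<open>The ideal\<close>

lemma smod_Irel: "smod Irel" by (simp add: Irel_def smod_rspan)

lemma Irel_left: assumes "x \<in> Irel" shows "z * x \<in> Irel"
  using assms[unfolded Irel_def]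
proof (induct rule: rspan_induct)
  case zero then show ?case by (simp add: Irel_def rspan_0)
next
  case (add a b) then show ?case by (simp add: distrib_left Irel_def rspan_add)
next
  case (gen r t)
  then obtain p q s where t: "t = p * q * s" "q \<in> rels" by blast
  have "z * t = (z * p) * q * s" by (simp add: t mult.assoc)
  then have "z * t \<in> Irel" unfolding Irel_def
    by (intro rspan_gen) (use t in blast)
  then have "scal r * (z * t) \<in> Irel" by (rule smodD(3)[OF smod_Irel])
  then show ?case by (simp add: scal_left_commute)
qed

lemma Irel_right: assumes "x \<in> Irel" shows "x * z \<in> Irel"
  using assms[unfolded Irel_def]
proof (induct rule: rspan_induct)
  case zero then show ?case by (simp add: Irel_def rspan_0)
next
  case (add a b) then show ?case by (simp add: distrib_right Irel_def rspan_add)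
next
  case (gen r t)
  then obtain p q s where t: "t = p * q * s" "q \<in> rels" by blast
  have "t * z = p * q * (s * z)" by (simp add: t mult.assoc)
  then have "t * z \<in> Irel" unfolding Irel_def
    by (intro rspan_gen) (use t in blast)
  then have "scal r * (t * z) \<in> Irel" by (rule smodD(3)[OF smod_Irel])
  then show ?case by (simp add: mult.assoc)
qed

lemma rels_Irel: "q \<in> rels \<Longrightarrow> q \<in> Irel"
proof -
  assume "q \<in> rels"
  moreover have "q = 1 * q * 1" by simp
  ultimately show "q \<in> Irel" unfolding Irel_def by (intro rspan_gen) blast
qed

definition cg :: "F \<Rightarrow> F \<Rightarrow> bool" (infix "\<approx>" 50) where
  "x \<approx> y \<longleftrightarrow> x - y \<in> Irel"

lemma cg_refl[simp]: "x \<approx> x" by (simp add: cg_def smodD(1)[OF smod_Irel])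
lemma cg_sym: "x \<approx> y \<Longrightarrow> y \<approx> x"
  unfolding cg_def using smod_uminus[OF smod_Irel, of "x - y"] by simp
lemma cg_trans[trans]: "x \<approx> y \<Longrightarrow> y \<approx> z \<Longrightarrow> x \<approx> z"
proof -
  assume "x \<approx> y" "y \<approx> z"
  then have "(x - y) + (y - z) \<in> Irel" unfolding cg_def by (rule smodD(2)[OF smod_Irel])
  then show "x \<approx> z" unfolding cg_def by simp
qed
lemma cg_add: "x \<approx> y \<Longrightarrow> x' \<approx> y' \<Longrightarrow> x + x' \<approx> y + y'"
proof -
  assume "x \<approx> y" "x' \<approx> y'"
  then have "(x - y) + (x' - y') \<in> Irel" unfolding cg_def by (rule smodD(2)[OF smod_Irel])
  then show ?thesis unfolding cg_def by (simp add: algebra_simps)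
qed
lemma cg_uminus: "x \<approx> y \<Longrightarrow> - x \<approx> - y"
  unfolding cg_def using smod_uminus[OF smod_Irel, of "x - y"] by simp
lemma cg_diff: "x \<approx> y \<Longrightarrow> x' \<approx> y' \<Longrightarrow> x - x' \<approx> y - y'"
  using cg_add[OF _ cg_uminus, of x y x' y'] by simp
lemma cg_mult: "x \<approx> y \<Longrightarrow> x' \<approx> y' \<Longrightarrow> x * x' \<approx> y * y'"
proof -
  assume a: "x \<approx> y" "x' \<approx> y'"
  have "(x - y) * x' + y * (x' - y') \<in> Irel"
    using a unfolding cg_def by (intro smodD(2)[OF smod_Irel] Irel_left Irel_right)
  then show ?thesis unfolding cg_def by (simp add: algebra_simps)
qed
lemma cg_multl: "x \<approx> y \<Longrightarrow> z * x \<approx> z * y" by (rule cg_mult[OF cg_refl])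
lemma cg_multr: "x \<approx> y \<Longrightarrow> x * z \<approx> y * z" by (rule cg_mult[OF _ cg_refl])
lemma cg_power: "x \<approx> y \<Longrightarrow> x ^ n \<approx> y ^ n"
  by (induct n) (simp_all add: cg_mult)

lemma cg_Irel: "x \<in> Irel \<Longrightarrow> x \<approx> 0" by (simp add: cg_def)

lemma s1_s1i: "s1 * s1i \<approx> 1" unfolding cg_def by (rule rels_Irel) (simp add: rels_def)
lemma s1i_s1: "s1i * s1 \<approx> 1" unfolding cg_def by (rule rels_Irel) (simp add: rels_def)
lemma s2_s2i: "s2 * s2i \<approx> 1" unfolding cg_def by (rule rels_Irel) (simp add: rels_def)
lemma s2i_s2: "s2i * s2 \<approx> 1" unfolding cg_def by (rule rels_Irel) (simp add: rels_def)
lemma braid: "s1 * s2 * s1 \<approx> s2 * s1 * s2" unfolding cg_def by (rule rels_Irel) (simp add: rels_def)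
lemma quintic1: "quintic s1 \<approx> 0" by (rule cg_Irel, rule rels_Irel) (simp add: rels_def)
lemma quintic2: "quintic s2 \<approx> 0" by (rule cg_Irel, rule rels_Irel) (simp add: rels_def)



lemma cg_eq: "x = y \<Longrightarrow> x \<approx> y" by simp

lemma cancel_mid: "a * b \<approx> 1 \<Longrightarrow> x * (a * b) * y \<approx> x * y"
  using cg_mult[OF cg_multl[of "a*b" 1 x] cg_refl[of y]] by simp

lemma scal_pull: "x * (scal r * y) = scal r * (x * y)"
  by (rule scal_left_commute[symmetric])

lemma pow_cancel: assumes "si * s \<approx> 1" shows "si ^ n * s ^ n \<approx> 1"
proof (induct n)
  case 0 then show ?case by simp
next
  case (Suc n)
  have "si ^ Suc n * s ^ Suc n = si ^ n * (si * s) * s ^ n"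
    by (simp only: power_Suc2[of si] power_Suc[of s] mult.assoc)
  also have "\<dots> \<approx> si ^ n * s ^ n" by (rule cancel_mid[OF assms])
  also have "\<dots> \<approx> 1" by (rule Suc)
  finally show ?case .
qed

definition Pinv :: "F \<Rightarrow> F" where
  "Pinv s = scal pe_inv * (s^4 - (scal pa * s^3 + scal pb * s^2 + scal pc * s + scal pd))"

lemma pw_simps: "(s::F) * s^4 = s^5" "s * s^3 = s^4" "s * s^2 = s^3" "s * s = s^2"
  by (simp_all add: eval_nat_numeral)

lemma scal_pe_inv_pe: "scal pe_inv * scal pe = 1"
  by (simp add: scal_mult[symmetric] pe_inv_pe)

lemma quintic_eq: "s^5 - (scal pa * s^4 + scal pb * s^3 + scal pc * s^2 + scal pd * s) = quintic s + scal pe"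
  by (simp add: quintic_def algebra_simps)

lemma s_Pinv: assumes q: "quintic s \<approx> 0" shows "s * Pinv s \<approx> 1"
proof -
  have e1: "s * Pinv s = scal pe_inv * (s * (s^4 - (scal pa * s^3 + scal pb * s^2 + scal pc * s + scal pd)))"
    unfolding Pinv_def by (rule scal_pull)
  have e2: "s * (s^4 - (scal pa * s^3 + scal pb * s^2 + scal pc * s + scal pd)) = s^5 - (scal pa * s^4 + scal pb * s^3 + scal pc * s^2 + scal pd * s)"
    using scal_comm[of pd s] by (simp add: right_diff_distrib distrib_left scal_pull pw_simps)
  have "s * Pinv s = scal pe_inv * (s^5 - (scal pa * s^4 + scal pb * s^3 + scal pc * s^2 + scal pd * s))"
    unfolding e1 e2 ..
  also have "\<dots> = scal pe_inv * (quintic s + scal pe)" by (simp only: quintic_eq)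
  also have "\<dots> \<approx> scal pe_inv * (0 + scal pe)" by (intro cg_multl cg_add q cg_refl)
  also have "\<dots> = 1" by (simp add: scal_pe_inv_pe)
  finally show ?thesis .
qed

lemma si_Pinv: assumes q: "quintic s \<approx> 0" and i: "si * s \<approx> 1" shows "si \<approx> Pinv s"
proof -
  have "si = si * 1" by simp
  also have "\<dots> \<approx> si * (s * Pinv s)" by (intro cg_multl cg_sym[OF s_Pinv[OF q]])
  also have "\<dots> = (si * s) * Pinv s" by (simp add: mult.assoc)
  also have "\<dots> \<approx> 1 * Pinv s" by (intro cg_multr i)
  finally show ?thesis by simp
qed

lemma s1i_Pinv: "s1i \<approx> Pinv s1" by (rule si_Pinv[OF quintic1 s1i_s1])
lemma s2i_Pinv: "s2i \<approx> Pinv s2" by (rule si_Pinv[OF quintic2 s2i_s2])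

definition E3 :: "F \<Rightarrow> F \<Rightarrow> F" where
  "E3 s si = scal pa * s^2 + scal pb * s + scal pc + scal pd * si + scal pe * si^2"

lemma s3_E3: assumes q: "quintic s \<approx> 0" and i: "s * si \<approx> 1" shows "s^3 \<approx> E3 s si"
proof -
  have i2: "s^2 * si^2 \<approx> 1"
  proof -
    have "s^2 * si^2 = s * (s * si) * si" by (simp add: power2_eq_square mult.assoc)
    also have "\<dots> \<approx> s * si" by (rule cancel_mid[OF i])
    finally show ?thesis using i by (rule cg_trans)
  qed
  have "s^3 = s^3 * 1" by simp
  also have "\<dots> \<approx> s^3 * (s^2 * si^2)" by (intro cg_multl cg_sym[OF i2])
  also have "\<dots> = s^5 * si^2" by (simp add: mult.assoc[symmetric] power_add[symmetric])
  also have "\<dots> \<approx> (quintic s + (scal pa * s^4 + scal pb * s^3 + scal pc * s^2 + scal pd * s + scal pe)) * si^2"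
    by (simp add: quintic_def)
  also have "\<dots> \<approx> (0 + (scal pa * s^4 + scal pb * s^3 + scal pc * s^2 + scal pd * s + scal pe)) * si^2"
    by (intro cg_multr cg_add q cg_refl)
  also have "\<dots> = scal pa * (s^2 * (s^2 * si^2)) + scal pb * (s * (s^2 * si^2)) + scal pc * (s^2 * si^2) + scal pd * ((s * si) * si) + scal pe * si^2"
    by (simp add: algebra_simps power2_eq_square eval_nat_numeral)
  also have "\<dots> \<approx> scal pa * (s^2 * 1) + scal pb * (s * 1) + scal pc * 1 + scal pd * (1 * si) + scal pe * si^2"
    by (intro cg_add cg_multl cg_multr cg_refl i i2)
  also have "\<dots> = E3 s si" by (simp add: E3_def)
  finally show ?thesis .
qed

lemma s2_cube: "s2^3 \<approx> E3 s2 s2i" by (rule s3_E3[OF quintic2 s2_s2i])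

lemma b1: "s1i * s2 * s1 \<approx> s2 * s1 * s2i"
proof -
  have "s1i * s2 * s1 = s1i * s2 * s1 * 1" by simp
  also have "\<dots> \<approx> s1i * s2 * s1 * (s2 * s2i)" by (intro cg_multl cg_sym[OF s2_s2i])
  also have "\<dots> = s1i * (s2 * s1 * s2) * s2i" by (simp add: mult.assoc)
  also have "\<dots> \<approx> s1i * (s1 * s2 * s1) * s2i" by (intro cg_mult cg_refl cg_sym[OF braid])
  also have "\<dots> = 1 * (s1i * s1) * (s2 * s1 * s2i)" by (simp add: mult.assoc)
  also have "\<dots> \<approx> 1 * (s2 * s1 * s2i)" by (rule cancel_mid[OF s1i_s1])
  finally show ?thesis by simp
qed

lemma b2: "s2i * s1 * s2 \<approx> s1 * s2 * s1i"
proof -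
  have "s2i * s1 * s2 = s2i * s1 * s2 * 1" by simp
  also have "\<dots> \<approx> s2i * s1 * s2 * (s1 * s1i)" by (intro cg_multl cg_sym[OF s1_s1i])
  also have "\<dots> = s2i * (s1 * s2 * s1) * s1i" by (simp add: mult.assoc)
  also have "\<dots> \<approx> s2i * (s2 * s1 * s2) * s1i" by (intro cg_mult cg_refl braid)
  also have "\<dots> = 1 * (s2i * s2) * (s1 * s2 * s1i)" by (simp add: mult.assoc)
  also have "\<dots> \<approx> 1 * (s1 * s2 * s1i)" by (rule cancel_mid[OF s2i_s2])
  finally show ?thesis by simp
qed

lemma braid_inv: "s1i * s2i * s1i \<approx> s2i * s1i * s2i"
proof -
  have "s1i * s2i * s1i = s1i * s2i * s1i * 1" by simp
  also have "\<dots> \<approx> s1i * s2i * s1i * ((s2 * s1 * s2) * (s2i * s1i * s2i))"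
  proof -
    have "(s2 * s1 * s2) * (s2i * s1i * s2i) = s2 * s1 * (s2 * s2i) * (s1i * s2i)" by (simp add: mult.assoc)
    also have "\<dots> \<approx> s2 * s1 * (s1i * s2i)" by (rule cancel_mid[OF s2_s2i])
    also have "\<dots> = s2 * (s1 * s1i) * s2i" by (simp add: mult.assoc)
    also have "\<dots> \<approx> s2 * s2i" by (rule cancel_mid[OF s1_s1i])
    also have "\<dots> \<approx> 1" by (rule s2_s2i)
    finally have "(s2 * s1 * s2) * (s2i * s1i * s2i) \<approx> 1" .
    then show ?thesis by (rule cg_multl[OF cg_sym])
  qed
  also have "\<dots> \<approx> s1i * s2i * s1i * ((s1 * s2 * s1) * (s2i * s1i * s2i))"
    by (intro cg_multl cg_multr cg_sym[OF braid])
  also have "\<dots> = s1i * s2i * (s1i * s1) * (s2 * s1 * s2i * s1i * s2i)" by (simp add: mult.assoc)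
  also have "\<dots> \<approx> s1i * s2i * (s2 * s1 * s2i * s1i * s2i)" by (rule cancel_mid[OF s1i_s1])
  also have "\<dots> = s1i * (s2i * s2) * (s1 * s2i * s1i * s2i)" by (simp add: mult.assoc)
  also have "\<dots> \<approx> s1i * (s1 * s2i * s1i * s2i)" by (rule cancel_mid[OF s2i_s2])
  also have "\<dots> = 1 * (s1i * s1) * (s2i * s1i * s2i)" by (simp add: mult.assoc)
  also have "\<dots> \<approx> 1 * (s2i * s1i * s2i)" by (rule cancel_mid[OF s1i_s1])
  finally show ?thesis by simp
qed



definition pspan :: "F \<Rightarrow> F set" where "pspan s = rspan (range (\<lambda>k::nat. s ^ k))"

lemma u1_pspan: "u1 = pspan s1" by (simp add: u1_def pspan_def)
lemma u2_pspan: "u2 = pspan s2" by (simp add: u2_def pspan_def)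

lemma pspan_pow: "s ^ k \<in> pspan s" unfolding pspan_def by (rule rspan_gen) simp
lemma pspan_1: "1 \<in> pspan s" using pspan_pow[of s 0] by simp
lemma pspan_s: "s \<in> pspan s" using pspan_pow[of s 1] by simp
lemma smod_pspan: "smod (pspan s)" by (simp add: pspan_def smod_rspan)

lemma pspan_mult_pow: assumes "y \<in> pspan s" shows "s ^ i * y \<in> pspan s"
  using assms[unfolded pspan_def]
proof (induct rule: rspan_induct)
  case zero then show ?case by (simp add: smodD(1)[OF smod_pspan])
next
  case (add a b) then show ?case by (simp add: distrib_left smodD(2)[OF smod_pspan])
next
  case (gen r t)
  then obtain j where t: "t = s ^ j" by blast
  have "s ^ i * (scal r * t) = scal r * s ^ (i + j)" by (simp add: t scal_pull power_add)
  then show ?case using smodD(3)[OF smod_pspan pspan_pow] by simp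
qed

lemma pspan_mult: assumes "x \<in> pspan s" "y \<in> pspan s" shows "x * y \<in> pspan s"
  using assms(1)[unfolded pspan_def]
proof (induct rule: rspan_induct)
  case zero then show ?case by (simp add: smodD(1)[OF smod_pspan])
next
  case (add a b) then show ?case by (simp add: distrib_right smodD(2)[OF smod_pspan])
next
  case (gen r t)
  then obtain j where t: "t = s ^ j" by blast
  have "scal r * t * y = scal r * (s ^ j * y)" by (simp add: t mult.assoc)
  then show ?case using smodD(3)[OF smod_pspan pspan_mult_pow[OF assms(2)]] by simp
qed

lemma pspan_diff: "x \<in> pspan s \<Longrightarrow> y \<in> pspan s \<Longrightarrow> x - y \<in> pspan s"
  by (rule smod_diff[OF smod_pspan])
lemma pspan_add: "x \<in> pspan s \<Longrightarrow> y \<in> pspan s \<Longrightarrow> x + y \<in> pspan s"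
  by (rule smodD(2)[OF smod_pspan])
lemma pspan_scal: "x \<in> pspan s \<Longrightarrow> scal r * x \<in> pspan s"
  by (rule smodD(3)[OF smod_pspan])
lemma pspan_scal1: "scal r \<in> pspan s"
  using pspan_scal[OF pspan_1, of r s] by simp
lemma pspan_power: "x \<in> pspan s \<Longrightarrow> x ^ n \<in> pspan s"
  by (induct n) (simp_all add: pspan_1 pspan_mult)

lemma Pinv_pspan: "Pinv s \<in> pspan s"
  unfolding Pinv_def
  by (intro pspan_scal pspan_diff pspan_add pspan_pow pspan_scal1 pspan_s)

lemma phi_pspan:
  assumes ps: "PhiF s = si" and q: "quintic s \<approx> 0" and i: "si * s \<approx> 1"
    and x: "x \<in> pspan s"
  shows "\<exists>x'\<in>pspan s. PhiF x \<approx> x'"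
  using x[unfolded pspan_def]
proof (induct rule: rspan_induct)
  case zero then show ?case using pspan_1[of s] smodD(1)[OF smod_pspan] by (intro bexI[of _ 0]) auto
next
  case (add a b)
  then obtain a' b' where "a' \<in> pspan s" "PhiF a \<approx> a'" "b' \<in> pspan s" "PhiF b \<approx> b'" by blast
  then show ?case by (intro bexI[of _ "a' + b'"]) (auto simp: PhiF_add intro: cg_add pspan_add)
next
  case (gen r t)
  then obtain j where t: "t = s ^ j" by blast
  have "PhiF (scal r * t) = scal (phiR r) * si ^ j" by (simp add: t PhiF_mult PhiF_scal PhiF_power ps)
  also have "\<dots> \<approx> scal (phiR r) * Pinv s ^ j" by (intro cg_multl cg_power si_Pinv q i)
  finally show ?case by (intro bexI[of _ "scal (phiR r) * Pinv s ^ j"] pspan_scal pspan_power Pinv_pspan)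
qed

lemma phi_u1: "x \<in> u1 \<Longrightarrow> \<exists>x'\<in>u1. PhiF x \<approx> x'"
  unfolding u1_pspan by (rule phi_pspan[OF PhiF_s1 quintic1 s1i_s1])
lemma phi_u2: "x \<in> u2 \<Longrightarrow> \<exists>x'\<in>u2. PhiF x \<approx> x'"
  unfolding u2_pspan by (rule phi_pspan[OF PhiF_s2 quintic2 s2i_s2])

lemma u1_mult: "x \<in> u1 \<Longrightarrow> y \<in> u1 \<Longrightarrow> x * y \<in> u1"
  unfolding u1_pspan by (rule pspan_mult)
lemma s1_u1: "s1 \<in> u1" unfolding u1_pspan by (rule pspan_s)
lemma s1pow_u1: "s1 ^ k \<in> u1" unfolding u1_pspan by (rule pspan_pow)
lemma one_u1: "1 \<in> u1" unfolding u1_pspan by (rule pspan_1)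
lemma Pinv1_u1: "Pinv s1 \<in> u1" unfolding u1_pspan by (rule Pinv_pspan)
lemma s2_u2: "s2 \<in> u2" unfolding u2_pspan by (rule pspan_s)
lemma s2pow_u2: "s2 ^ k \<in> u2" unfolding u2_pspan by (rule pspan_pow)
lemma one_u2: "1 \<in> u2" unfolding u2_pspan by (rule pspan_1)
lemma Pinv2_u2: "Pinv s2 \<in> u2" unfolding u2_pspan by (rule Pinv_pspan)

section \<open>Phi of the ideal\<close>

lemma phi_quintic: assumes ps: "PhiF s = si" and q: "quintic s \<approx> 0" and i: "si * s \<approx> 1"
  shows "PhiF (quintic s) \<approx> 0"
proof -
  have c: "si ^ (m + k) * s ^ k \<approx> si ^ m" for m k
  proof -
    have "si ^ (m + k) * s ^ k = si ^ m * (si ^ k * s ^ k) * 1" by (simp add: power_add mult.assoc)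
    also have "\<dots> \<approx> si ^ m * 1" by (rule cancel_mid[OF pow_cancel[OF i]])
    finally show ?thesis by simp
  qed
  have c5: "si^5 * s^5 \<approx> 1" using c[of 0 5] by simp
  have c4: "si^5 * s^4 \<approx> si" using c[of 1 4] by simp
  have c3: "si^5 * s^3 \<approx> si^2" using c[of 2 3] by simp
  have c2: "si^5 * s^2 \<approx> si^3" using c[of 3 2] by simp
  have c1: "si^5 * s \<approx> si^4" using c[of 4 1] by simp
  have "si ^ 5 * quintic s = si^5 * s^5 - (scal pa * (si^5 * s^4) + scal pb * (si^5 * s^3) + scal pc * (si^5 * s^2) + scal pd * (si^5 * s) + si^5 * scal pe)"
    unfolding quintic_def right_diff_distrib distrib_left by (simp only: scal_pull)
  also have "si^5 * scal pe = scal pe * si^5" by (rule scal_comm[symmetric])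
  also have "si^5 * s^5 - (scal pa * (si^5 * s^4) + scal pb * (si^5 * s^3) + scal pc * (si^5 * s^2) + scal pd * (si^5 * s) + scal pe * si^5)
     \<approx> 1 - (scal pa * si + scal pb * si^2 + scal pc * si^3 + scal pd * si^4 + scal pe * si^5)"
    by (intro cg_diff cg_add cg_multl c1 c2 c3 c4 c5 cg_refl)
  finally have A: "si ^ 5 * quintic s \<approx> 1 - (scal pa * si + scal pb * si^2 + scal pc * si^3 + scal pd * si^4 + scal pe * si^5)" .
  have B: "si ^ 5 * quintic s \<approx> 0" using cg_multl[OF q, of "si^5"] by simp
  have e: "scal pe_inv * (scal pe * y) = y" for y
    by (simp add: mult.assoc[symmetric] scal_pe_inv_pe)
  have P: "PhiF (quintic s) = si^5 - (scal (- pe_inv * pd) * si^4 + scal (- pe_inv * pc) * si^3 + scal (- pe_inv * pb) * si^2 + scal (- pe_inv * pa) * si + scal pe_inv)"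
    by (simp add: quintic_def PhiF_diff PhiF_add PhiF_mult PhiF_scal PhiF_power ps
          phiR_pa phiR_pb phiR_pc phiR_pd phiR_pe)
  have "PhiF (quintic s) = - scal pe_inv * (1 - (scal pa * si + scal pb * si^2 + scal pc * si^3 + scal pd * si^4 + scal pe * si^5))"
    unfolding P scal_mult scal_uminus
    by (simp add: algebra_simps e)
  also have "\<dots> \<approx> - scal pe_inv * 0"
    by (intro cg_multl cg_trans[OF cg_sym[OF A] B])
  finally show ?thesis by simp
qed

lemma phi_rels: "q \<in> rels \<Longrightarrow> PhiF q \<in> Irel"
proof -
  assume "q \<in> rels"
  then consider "q = s1 * s1i - 1" | "q = s1i * s1 - 1" | "q = s2 * s2i - 1" | "q = s2i * s2 - 1"
    | "q = s1 * s2 * s1 - s2 * s1 * s2" | "q = quintic s1" | "q = quintic s2"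
    unfolding rels_def by blast
  then show ?thesis
  proof cases
    case 1 then show ?thesis by (simp add: PhiF_diff PhiF_mult rels_Irel rels_def)
  next
    case 2 then show ?thesis by (simp add: PhiF_diff PhiF_mult rels_Irel rels_def)
  next
    case 3 then show ?thesis by (simp add: PhiF_diff PhiF_mult rels_Irel rels_def)
  next
    case 4 then show ?thesis by (simp add: PhiF_diff PhiF_mult rels_Irel rels_def)
  next
    case 5 then show ?thesis using braid_inv by (simp add: PhiF_diff PhiF_mult cg_def)
  next
    case 6 then show ?thesis using phi_quintic[OF PhiF_s1 quintic1 s1i_s1] by (simp add: cg_def)
  next
    case 7 then show ?thesis using phi_quintic[OF PhiF_s2 quintic2 s2i_s2] by (simp add: cg_def)
  qed
qed

lemma phi_Irel: "x \<in> Irel \<Longrightarrow> PhiF x \<in> Irel"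
proof -
  assume "x \<in> Irel"
  then show ?thesis unfolding Irel_def[of] 
  proof (induct rule: rspan_induct)
    case zero then show ?case using smodD(1)[OF smod_Irel] by (simp add: Irel_def)
  next
    case (add a b) then show ?case using smodD(2)[OF smod_Irel] by (simp add: PhiF_add Irel_def)
  next
    case (gen r t)
    then obtain p q z where t: "t = p * q * z" "q \<in> rels" by blast
    have "PhiF (scal r * t) = scal (phiR r) * (PhiF p * PhiF q * PhiF z)"
      by (simp add: t PhiF_mult PhiF_scal)
    moreover have "scal (phiR r) * (PhiF p * PhiF q * PhiF z) \<in> Irel"
      by (intro smodD(3)[OF smod_Irel] Irel_left Irel_right phi_rels t(2))
    ultimately show ?case by (simp add: Irel_def)
  qed
qed



definition good :: "F set \<Rightarrow> bool" where "good W \<longleftrightarrow> smod W \<and> Irel \<subseteq> W"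

lemma good_smod: "good W \<Longrightarrow> smod W" by (simp add: good_def)

lemma good_cg: assumes g: "good W" and c: "x \<approx> y" and y: "y \<in> W" shows "x \<in> W"
proof -
  have "x - y \<in> W" using g c unfolding good_def cg_def by blast
  then have "(x - y) + y \<in> W" by (rule smodD(2)[OF good_smod[OF g] _ y])
  then show ?thesis by simp
qed

definition ts :: "F set \<Rightarrow> F \<Rightarrow> bool" where "ts W h \<longleftrightarrow> (\<forall>x\<in>u1. \<forall>y\<in>u1. x * h * y \<in> W)"

lemma tsI: "(\<And>x y. x \<in> u1 \<Longrightarrow> y \<in> u1 \<Longrightarrow> x * h * y \<in> W) \<Longrightarrow> ts W h"
  by (simp add: ts_def)
lemma tsD: "ts W h \<Longrightarrow> x \<in> u1 \<Longrightarrow> y \<in> u1 \<Longrightarrow> x * h * y \<in> W"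
  by (simp add: ts_def)

lemma ts_cg: assumes g: "good W" and c: "h \<approx> h'" and t: "ts W h'" shows "ts W h"
proof (rule tsI)
  fix x y assume "x \<in> u1" "y \<in> u1"
  then have "x * h' * y \<in> W" by (rule tsD[OF t])
  moreover have "x * h * y \<approx> x * h' * y" by (intro cg_mult cg_refl c)
  ultimately show "x * h * y \<in> W" using good_cg[OF g] by blast
qed

lemma ts_add: assumes g: "good W" and a: "ts W a" and b: "ts W b" shows "ts W (a + b)"
proof (rule tsI)
  fix x y assume xy: "x \<in> u1" "y \<in> u1"
  have "x * (a + b) * y = x * a * y + x * b * y" by (simp add: distrib_left distrib_right)
  then show "x * (a + b) * y \<in> W" using smodD(2)[OF good_smod[OF g] tsD[OF a xy] tsD[OF b xy]] by simp
qed

lemma ts_scal: assumes g: "good W" and a: "ts W a" shows "ts W (scal r * a)"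
proof (rule tsI)
  fix x y assume xy: "x \<in> u1" "y \<in> u1"
  have "x * (scal r * a) * y = scal r * (x * a * y)" by (simp only: scal_pull mult.assoc)
  then show "x * (scal r * a) * y \<in> W" using smodD(3)[OF good_smod[OF g] tsD[OF a xy]] by simp
qed

lemma ts_left: assumes q: "q \<in> u1" and t: "ts W h" shows "ts W (q * h)"
proof (rule tsI)
  fix x y assume xy: "x \<in> u1" "y \<in> u1"
  have "x * (q * h) * y = (x * q) * h * y" by (simp add: mult.assoc)
  then show "x * (q * h) * y \<in> W" using tsD[OF t u1_mult[OF xy(1) q] xy(2)] by simp
qed

lemma ts_right: assumes q: "q \<in> u1" and t: "ts W h" shows "ts W (h * q)"
proof (rule tsI)
  fix x y assume xy: "x \<in> u1" "y \<in> u1"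
  have "x * (h * q) * y = x * h * (q * y)" by (simp add: mult.assoc)
  then show "x * (h * q) * y \<in> W" using tsD[OF t xy(1) u1_mult[OF q xy(2)]] by simp
qed

lemma ts_s1i_left: "good W \<Longrightarrow> ts W h \<Longrightarrow> ts W (s1i * h)"
  by (rule ts_cg[OF _ cg_multr[OF s1i_Pinv]], assumption, rule ts_left[OF Pinv1_u1])
lemma ts_s1i_right: "good W \<Longrightarrow> ts W h \<Longrightarrow> ts W (h * s1i)"
  by (rule ts_cg[OF _ cg_multl[OF s1i_Pinv]], assumption, rule ts_right[OF Pinv1_u1])

lemma smod_msum2: assumes A: "smod A" and B: "smod B" shows "smod (msum2 A B)"
  unfolding smod_def
proof (intro conjI ballI allI)
  show "0 \<in> msum2 A B" unfolding msum2_def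
    by (intro CollectI exI[of _ 0] conjI smodD(1)[OF A] smodD(1)[OF B]) simp
next
  fix x y assume "x \<in> msum2 A B" "y \<in> msum2 A B"
  then obtain a b a' b' where "x = a + b" "a \<in> A" "b \<in> B" "y = a' + b'" "a' \<in> A" "b' \<in> B"
    unfolding msum2_def by blast
  then show "x + y \<in> msum2 A B" unfolding msum2_def
    by (intro CollectI exI[of _ "a + a'"] exI[of _ "b + b'"] conjI smodD(2)[OF A] smodD(2)[OF B])
       (simp_all add: add_ac)
next
  fix r x assume "x \<in> msum2 A B"
  then obtain a b where "x = a + b" "a \<in> A" "b \<in> B" unfolding msum2_def by blast
  then show "scal r * x \<in> msum2 A B" unfolding msum2_def
    by (intro CollectI exI[of _ "scal r * a"] exI[of _ "scal r * b"] conjI smodD(3)[OF A] smodD(3)[OF B])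
       (simp_all add: distrib_left)
qed

lemma smod_zero: "smod {0}" by (simp add: smod_def)

lemma smod_msum: "(\<forall>X\<in>set Xs. smod X) \<Longrightarrow> smod (msum Xs)"
  by (induct Xs) (simp_all add: msum_def smod_zero smod_msum2)

lemma msum2_left: "x \<in> A \<Longrightarrow> 0 \<in> B \<Longrightarrow> x \<in> msum2 A B"
  unfolding msum2_def by (intro CollectI exI[of _ x] exI[of _ 0]) simp
lemma msum2_right: "0 \<in> A \<Longrightarrow> x \<in> B \<Longrightarrow> x \<in> msum2 A B"
  unfolding msum2_def by (intro CollectI exI[of _ 0] exI[of _ x]) simp

lemma msum_mem: "(\<forall>X\<in>set Xs. smod X) \<Longrightarrow> X \<in> set Xs \<Longrightarrow> x \<in> X \<Longrightarrow> x \<in> msum Xs"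
proof (induct Xs)
  case Nil then show ?case by simp
next
  case (Cons Y Ys)
  have "msum (Y # Ys) = msum2 Y (msum Ys)" by (simp add: msum_def)
  moreover have "0 \<in> msum Ys" using Cons(2) smodD(1)[OF smod_msum] by simp
  moreover have "0 \<in> Y" using Cons(2) smodD(1) by simp
  ultimately show ?case using Cons by (auto intro: msum2_left msum2_right)
qed

lemma good_preim: assumes "smod X" shows "good (preim X)"
  unfolding good_def preim_def
proof
  show "smod (msum2 X Irel)" by (rule smod_msum2[OF assms smod_Irel])
  show "Irel \<subseteq> msum2 X Irel" using msum2_right[OF smodD(1)[OF assms]] by blast
qed

lemma preim_sub: "smod X \<Longrightarrow> x \<in> X \<Longrightarrow> x \<in> preim X"
  unfolding preim_def by (rule msum2_left) (simp_all add: smodD(1)[OF smod_Irel])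

lemma sub_W: "(\<forall>X\<in>set Xs. smod X) \<Longrightarrow> X \<in> set Xs \<Longrightarrow> x \<in> X \<Longrightarrow> x \<in> preim (msum Xs)"
  by (rule preim_sub[OF smod_msum msum_mem])

lemma mprod3_gen: "a \<in> A \<Longrightarrow> b \<in> B \<Longrightarrow> c \<in> C \<Longrightarrow> a * b * c \<in> mprod [A, B, C]"
  unfolding mprod_def by (rule rspan_gen, intro CollectI exI[of _ "[a,b,c]"]) (simp add: mult.assoc)

lemma mprod2_gen: "a \<in> A \<Longrightarrow> b \<in> B \<Longrightarrow> a * b \<in> mprod [A, B]"
  unfolding mprod_def by (rule rspan_gen, intro CollectI exI[of _ "[a,b]"]) simp

lemma gens3: assumes "t \<in> {prod_list xs |xs. list_all2 (\<lambda>x X. x \<in> X) xs [A, B, C]}"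
  obtains a b c where "a \<in> A" "b \<in> B" "c \<in> C" "t = a * b * c"
proof -
  from assms obtain xs where t: "t = prod_list xs" and l: "list_all2 (\<lambda>x X. x \<in> X) xs [A, B, C]" by blast
  from l obtain a b c where "xs = [a, b, c]" "a \<in> A" "b \<in> B" "c \<in> C"
    by (auto simp: list_all2_Cons2)
  then show ?thesis using that t by (simp add: mult.assoc)
qed

lemma gens2: assumes "t \<in> {prod_list xs |xs. list_all2 (\<lambda>x X. x \<in> X) xs [A, B]}"
  obtains a b where "a \<in> A" "b \<in> B" "t = a * b"
proof -
  from assms obtain xs where t: "t = prod_list xs" and l: "list_all2 (\<lambda>x X. x \<in> X) xs [A, B]" by blast
  from l obtain a b where "xs = [a, b]" "a \<in> A" "b \<in> B"
    by (auto simp: list_all2_Cons2)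
  then show ?thesis using that t by simp
qed

lemma phi_rspan: assumes g: "good W" and x: "x \<in> rspan S" and h: "\<And>t. t \<in> S \<Longrightarrow> PhiF t \<in> W"
  shows "PhiF x \<in> W"
  using x
proof (induct rule: rspan_induct)
  case zero then show ?case using smodD(1)[OF good_smod[OF g]] by simp
next
  case (add a b) then show ?case using smodD(2)[OF good_smod[OF g]] by (simp add: PhiF_add)
next
  case (gen r t)
  have "scal (phiR r) * PhiF t \<in> W" by (rule smodD(3)[OF good_smod[OF g] h[OF gen]])
  then show ?case by (simp add: PhiF_mult PhiF_scal)
qed

lemma phi_mid: assumes g: "good W" and t: "ts W (PhiF h)" and x: "x \<in> mid h" shows "PhiF x \<in> W"
  using g x[unfolded mid_def mprod_def]
proof (rule phi_rspan)
  fix t assume "t \<in> {prod_list xs |xs. list_all2 (\<lambda>x X. x \<in> X) xs [u1, {h}, u1]}"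
  then obtain a b c where abc: "a \<in> u1" "b \<in> {h}" "c \<in> u1" "t = a * b * c" by (rule gens3)
  obtain a' where a': "a' \<in> u1" "PhiF a \<approx> a'" using phi_u1[OF abc(1)] by blast
  obtain c' where c': "c' \<in> u1" "PhiF c \<approx> c'" using phi_u1[OF abc(3)] by blast
  have "PhiF t = PhiF a * PhiF h * PhiF c" using abc by (simp add: PhiF_mult)
  also have "\<dots> \<approx> a' * PhiF h * c'" by (intro cg_mult cg_refl a'(2) c'(2))
  finally show "PhiF t \<in> W" using good_cg[OF g _ tsD[OF t a'(1) c'(1)]] by blast
qed

lemma phi_u1w: assumes g: "good W" and w: "\<And>y. y \<in> u1 \<Longrightarrow> y * PhiF h \<in> W" and x: "x \<in> mprod [u1, {h}]"
  shows "PhiF x \<in> W"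
  using g x[unfolded mprod_def]
proof (rule phi_rspan)
  fix t assume "t \<in> {prod_list xs |xs. list_all2 (\<lambda>x X. x \<in> X) xs [u1, {h}]}"
  then obtain a b where ab: "a \<in> u1" "b \<in> {h}" "t = a * b" by (rule gens2)
  obtain a' where a': "a' \<in> u1" "PhiF a \<approx> a'" using phi_u1[OF ab(1)] by blast
  have "PhiF t = PhiF a * PhiF h" using ab by (simp add: PhiF_mult)
  also have "\<dots> \<approx> a' * PhiF h" by (intro cg_mult cg_refl a'(2))
  finally show "PhiF t \<in> W" using good_cg[OF g _ w[OF a'(1)]] by blast
qed

lemma phi_u121: assumes g: "good W" and w: "mprod [u1, u2, u1] \<subseteq> W" and x: "x \<in> mprod [u1, u2, u1]"
  shows "PhiF x \<in> W"
  using g x[unfolded mprod_def]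
proof (rule phi_rspan)
  fix t assume "t \<in> {prod_list xs |xs. list_all2 (\<lambda>x X. x \<in> X) xs [u1, u2, u1]}"
  then obtain a b c where abc: "a \<in> u1" "b \<in> u2" "c \<in> u1" "t = a * b * c" by (rule gens3)
  obtain a' where a': "a' \<in> u1" "PhiF a \<approx> a'" using phi_u1[OF abc(1)] by blast
  obtain b' where b': "b' \<in> u2" "PhiF b \<approx> b'" using phi_u2[OF abc(2)] by blast
  obtain c' where c': "c' \<in> u1" "PhiF c \<approx> c'" using phi_u1[OF abc(3)] by blast
  have "PhiF t = PhiF a * PhiF b * PhiF c" using abc by (simp add: PhiF_mult)
  also have "\<dots> \<approx> a' * b' * c'" by (intro cg_mult a'(2) b'(2) c'(2))
  finally show "PhiF t \<in> W" using good_cg[OF g _ subsetD[OF w mprod3_gen[OF a'(1) b'(1) c'(1)]]] by blast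
qed

lemma mid_ts: "mid h \<subseteq> W \<Longrightarrow> ts W h"
  unfolding mid_def by (rule tsI) (blast intro: mprod3_gen)

lemma u121_ts: "mprod [u1, u2, u1] \<subseteq> W \<Longrightarrow> y \<in> u2 \<Longrightarrow> ts W y"
  by (rule tsI) (blast intro: mprod3_gen)



section \<open>The two special elements\<close>

context
  fixes W
  assumes g: "good W"
    and m121: "mprod [u1, u2, u1] \<subseteq> W"
    and mA: "mid (s2 * s1i * s2) \<subseteq> W"
    and mB: "mid (s2i * s1 * s2i) \<subseteq> W"
    and mC: "mid (s2i ^ 2 * s1 * s2i) \<subseteq> W"
    and mD: "mid (s2i * s1 * s2i ^ 2) \<subseteq> W"
begin

lemma tA: "ts W (s2 * s1i * s2)" by (rule mid_ts[OF mA])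
lemma tB: "ts W (s2i * s1 * s2i)" by (rule mid_ts[OF mB])
lemma tC: "ts W (s2i ^ 2 * s1 * s2i)" by (rule mid_ts[OF mC])
lemma tD: "ts W (s2i * s1 * s2i ^ 2)" by (rule mid_ts[OF mD])
lemma t_s2: "ts W s2" by (rule u121_ts[OF m121 s2_u2])
lemma t_s2i: "ts W s2i" by (rule ts_cg[OF g s2i_Pinv u121_ts[OF m121 Pinv2_u2]])

lemma special1: "ts W (s2 ^ 2 * s1i * s2)"
proof -
  have e1: "s2 ^ 2 * s1i * s2 \<approx> s2 ^ 3 * s1 * s2i * s1i"
  proof -
    have "s2 ^ 2 * s1i * s2 = s2 ^ 2 * s1i * s2 * 1" by simp
    also have "\<dots> \<approx> s2 ^ 2 * s1i * s2 * (s1 * s1i)" by (intro cg_multl cg_sym[OF s1_s1i])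
    also have "\<dots> = s2 ^ 2 * (s1i * s2 * s1) * s1i" by (simp add: mult.assoc)
    also have "\<dots> \<approx> s2 ^ 2 * (s2 * s1 * s2i) * s1i" by (intro cg_mult cg_refl b1)
    also have "\<dots> = s2 ^ 3 * s1 * s2i * s1i" by (simp add: mult.assoc eval_nat_numeral)
    finally show ?thesis .
  qed
  have e2: "s2 ^ 3 * s1 * s2i \<approx> scal pa * (s2 ^ 2 * s1 * s2i) + scal pb * (s2 * s1 * s2i) + scal pc * (s1 * s2i)
       + scal pd * (s2i * s1 * s2i) + scal pe * (s2i ^ 2 * s1 * s2i)"
  proof -
    have "s2 ^ 3 * s1 * s2i \<approx> E3 s2 s2i * s1 * s2i" by (intro cg_multr s2_cube)
    also have "E3 s2 s2i * s1 * s2i = scal pa * (s2 ^ 2 * s1 * s2i) + scal pb * (s2 * s1 * s2i) + scal pc * (s1 * s2i)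
       + scal pd * (s2i * s1 * s2i) + scal pe * (s2i ^ 2 * s1 * s2i)"
      by (simp add: E3_def distrib_right mult.assoc)
    finally show ?thesis .
  qed
  have a1: "ts W (s2 ^ 2 * s1 * s2i)"
  proof -
    have "s2 ^ 2 * s1 * s2i = s2 * (s2 * s1 * s2i)" by (simp add: mult.assoc power2_eq_square)
    also have "\<dots> \<approx> s2 * (s1i * s2 * s1)" by (intro cg_multl cg_sym[OF b1])
    also have "\<dots> = (s2 * s1i * s2) * s1" by (simp add: mult.assoc)
    finally show ?thesis by (rule ts_cg[OF g _ ts_right[OF s1_u1 tA]])
  qed
  have a2: "ts W (s2 * s1 * s2i)"
  proof -
    have "s2 * s1 * s2i \<approx> s1i * s2 * s1" by (rule cg_sym[OF b1])
    also have "\<dots> = s1i * (s2 * s1)" by (simp add: mult.assoc)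
    finally show ?thesis by (rule ts_cg[OF g _ ts_s1i_left[OF g ts_right[OF s1_u1 t_s2]]])
  qed
  have a3: "ts W (s1 * s2i)" by (rule ts_left[OF s1_u1 t_s2i])
  have "ts W (s2 ^ 3 * s1 * s2i)"
    by (rule ts_cg[OF g e2]) (intro ts_add[OF g] ts_scal[OF g] a1 a2 a3 tB tC)
  then have "ts W (s2 ^ 3 * s1 * s2i * s1i)" by (rule ts_s1i_right[OF g])
  then show ?thesis by (rule ts_cg[OF g e1])
qed

lemma special2: "ts W (s2 * s1i * s2 ^ 2)"
proof -
  have e1: "s2 * s1i * s2 ^ 2 \<approx> s1i * (s2i * s1 * s2 ^ 3)"
  proof -
    have "s2 * s1i * s2 ^ 2 = 1 * (s2 * s1i * s2 ^ 2)" by simp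
    also have "\<dots> \<approx> (s1i * s1) * (s2 * s1i * s2 ^ 2)" by (intro cg_multr cg_sym[OF s1i_s1])
    also have "\<dots> = s1i * (s1 * s2 * s1i) * s2 ^ 2" by (simp add: mult.assoc)
    also have "\<dots> \<approx> s1i * (s2i * s1 * s2) * s2 ^ 2" by (intro cg_mult cg_refl cg_sym[OF b2])
    also have "\<dots> = s1i * (s2i * s1 * s2 ^ 3)" by (simp add: mult.assoc eval_nat_numeral)
    finally show ?thesis .
  qed
  have sc: "x * scal r = scal r * x" for x r by (rule scal_comm[symmetric])
  have e2: "s2i * s1 * s2 ^ 3 \<approx> scal pa * (s2i * s1 * s2 ^ 2) + scal pb * (s2i * s1 * s2) + scal pc * (s2i * s1)
       + scal pd * (s2i * s1 * s2i) + scal pe * (s2i * s1 * s2i ^ 2)"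
  proof -
    have "s2i * s1 * s2 ^ 3 \<approx> s2i * s1 * E3 s2 s2i" by (intro cg_multl s2_cube)
    also have "s2i * s1 * E3 s2 s2i = scal pa * (s2i * s1 * s2 ^ 2) + scal pb * (s2i * s1 * s2) + scal pc * (s2i * s1)
       + scal pd * (s2i * s1 * s2i) + scal pe * (s2i * s1 * s2i ^ 2)"
      unfolding E3_def distrib_left scal_pull sc[of "s2i * s1" pc] ..
    finally show ?thesis .
  qed
  have a1: "ts W (s2i * s1 * s2 ^ 2)"
  proof -
    have "s2i * s1 * s2 ^ 2 = (s2i * s1 * s2) * s2" by (simp add: mult.assoc power2_eq_square)
    also have "\<dots> \<approx> (s1 * s2 * s1i) * s2" by (intro cg_multr b2)
    also have "\<dots> = s1 * (s2 * s1i * s2)" by (simp add: mult.assoc)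
    finally show ?thesis by (rule ts_cg[OF g _ ts_left[OF s1_u1 tA]])
  qed
  have a2: "ts W (s2i * s1 * s2)"
  proof -
    have "s2i * s1 * s2 \<approx> s1 * s2 * s1i" by (rule b2)
    then show ?thesis by (rule ts_cg[OF g _ ts_s1i_right[OF g ts_left[OF s1_u1 t_s2]]])
  qed
  have a3: "ts W (s2i * s1)" by (rule ts_right[OF s1_u1 t_s2i])
  have "ts W (s2i * s1 * s2 ^ 3)"
    by (rule ts_cg[OF g e2]) (intro ts_add[OF g] ts_scal[OF g] a1 a2 a3 tB tD)
  then have "ts W (s1i * (s2i * s1 * s2 ^ 3))" by (rule ts_s1i_left[OF g])
  then show ?thesis by (rule ts_cg[OF g e1])
qed

end



lemma PhiF_omega: "PhiF omega = omega_inv"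
  by (simp add: omega_def omega_inv_def PhiF_mult PhiF_power)
lemma PhiF_omega_inv: "PhiF omega_inv = omega"
  by (simp add: omega_def omega_inv_def PhiF_mult PhiF_power)

lemma stable_msum:
  assumes sm: "\<forall>X\<in>set Xs. smod X"
    and parts: "\<forall>X\<in>set Xs. \<forall>x\<in>X. PhiF x \<in> preim (msum Xs)"
  shows "Phi_stable (msum Xs)"
proof -
  define W where "W = preim (msum Xs)"
  have g: "good W" unfolding W_def by (rule good_preim[OF smod_msum[OF sm]])
  have sub: "set Ys \<subseteq> set Xs \<Longrightarrow> u \<in> msum Ys \<Longrightarrow> PhiF u \<in> W" for Ys u
  proof (induct Ys arbitrary: u)
    case Nil then show ?case using smodD(1)[OF good_smod[OF g]] by (simp add: msum_def)
  next
    case (Cons Y Ys)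
    from Cons(3) obtain a b where ab: "u = a + b" "a \<in> Y" "b \<in> msum Ys"
      by (auto simp: msum_def msum2_def)
    have "PhiF a \<in> W" using parts Cons(2) ab(2) unfolding W_def by auto
    moreover have "PhiF b \<in> W" using Cons ab(3) by auto
    ultimately show ?case using ab(1) smodD(2)[OF good_smod[OF g]] by (simp add: PhiF_add)
  qed
  show ?thesis unfolding Phi_stable_def
  proof
    fix y assume "y \<in> PhiF ` preim (msum Xs)"
    then obtain x where x: "x \<in> preim (msum Xs)" "y = PhiF x" by blast
    then obtain u r where ur: "x = u + r" "u \<in> msum Xs" "r \<in> Irel" by (auto simp: preim_def msum2_def)
    have "PhiF u \<in> W" by (rule sub[OF order_refl ur(2)])
    moreover have "PhiF r \<in> W" using g phi_Irel[OF ur(3)] unfolding good_def by blast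
    ultimately show "y \<in> preim (msum Xs)" using x ur smodD(2)[OF good_smod[OF g]] unfolding W_def by (simp add: PhiF_add)
  qed
qed

context
  fixes Xs :: "F set list"
  assumes sm: "\<forall>X\<in>set Xs. smod X"
begin

abbreviation WW where "WW \<equiv> preim (msum Xs)"

lemma gW: "good WW" by (rule good_preim[OF smod_msum[OF sm]])

lemma inW: "X \<in> set Xs \<Longrightarrow> X \<subseteq> WW" using sub_W[OF sm] by blast

lemma mid_pair: "mid h \<in> set Xs \<Longrightarrow> mid (PhiF h) \<in> set Xs \<Longrightarrow> \<forall>x\<in>mid h. PhiF x \<in> WW"
proof -
  assume a: "mid h \<in> set Xs" and b: "mid (PhiF h) \<in> set Xs"
  show ?thesis using phi_mid[OF gW mid_ts[OF inW[OF b]]] by blast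
qed

lemma u1w_pair: "mprod [u1, {h}] \<in> set Xs \<Longrightarrow> mprod [u1, {PhiF h}] \<in> set Xs \<Longrightarrow> \<forall>x\<in>mprod [u1, {h}]. PhiF x \<in> WW"
  by (blast intro: phi_u1w[OF gW] subsetD[OF inW] mprod2_gen)

lemma u121_part: "mprod [u1, u2, u1] \<in> set Xs \<Longrightarrow> \<forall>x\<in>mprod [u1, u2, u1]. PhiF x \<in> WW"
proof -
  assume a: "mprod [u1, u2, u1] \<in> set Xs"
  show ?thesis using phi_u121[OF gW inW[OF a]] by blast
qed

lemma U1_parts: assumes U: "set U1_list \<subseteq> set Xs" shows "\<forall>X\<in>set U1_list. \<forall>x\<in>X. PhiF x \<in> WW"
proof -
  have m121: "mprod [u1, u2, u1] \<subseteq> WW" using U inW by (simp add: U1_list_def)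
  have mA: "mid (s2 * s1i * s2) \<subseteq> WW" using U inW by (simp add: U1_list_def)
  have mB: "mid (s2i * s1 * s2i) \<subseteq> WW" using U inW by (simp add: U1_list_def)
  have mC: "mid (s2i ^ 2 * s1 * s2i) \<subseteq> WW" using U inW by (simp add: U1_list_def)
  have mD: "mid (s2i * s1 * s2i ^ 2) \<subseteq> WW" using U inW by (simp add: U1_list_def)
  note sp1 = special1[OF gW m121 mA mB mC mD]
  note sp2 = special2[OF gW m121 mA mB mC mD]
  have PC: "PhiF (s2i ^ 2 * s1 * s2i) = s2 ^ 2 * s1i * s2" by (simp add: PhiF_mult PhiF_power)
  have PD: "PhiF (s2i * s1 * s2i ^ 2) = s2 * s1i * s2 ^ 2" by (simp add: PhiF_mult PhiF_power)
  have c: "\<forall>x\<in>mid (s2i ^ 2 * s1 * s2i). PhiF x \<in> WW" using phi_mid[OF gW, of "s2i ^ 2 * s1 * s2i"] sp1 PC by auto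
  have d: "\<forall>x\<in>mid (s2i * s1 * s2i ^ 2). PhiF x \<in> WW" using phi_mid[OF gW, of "s2i * s1 * s2i ^ 2"] sp2 PD by auto
  have P: "\<And>h. mid h \<in> set U1_list \<Longrightarrow> mid (PhiF h) \<in> set U1_list \<Longrightarrow> \<forall>x\<in>mid h. PhiF x \<in> WW"
    using mid_pair U by blast
  have Q: "\<And>h. mprod [u1, {h}] \<in> set U1_list \<Longrightarrow> mprod [u1, {PhiF h}] \<in> set U1_list \<Longrightarrow> \<forall>x\<in>mprod [u1, {h}]. PhiF x \<in> WW"
    using u1w_pair U by blast
  have R: "\<forall>x\<in>mprod [u1, u2, u1]. PhiF x \<in> WW" using u121_part U by (simp add: U1_list_def)
  show ?thesis
    unfolding U1_list_def
    apply (simp only: list.set insert_iff empty_iff ball_simps simp_thms)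
    apply (intro conjI)
    apply (rule R)
    apply (rule Q; simp add: U1_list_def PhiF_omega PhiF_omega_inv)
    apply (rule Q; simp add: U1_list_def PhiF_omega PhiF_omega_inv)
    apply (rule P; simp add: U1_list_def PhiF_mult PhiF_power; fail)+
    apply (rule c)
    apply (rule d)
    done
qed

lemma omega_parts: assumes "mprod [u1, {omega ^ k}] \<in> set Xs" "mprod [u1, {omega_inv ^ k}] \<in> set Xs"
  shows "\<forall>x\<in>mprod [u1, {omega ^ k}]. PhiF x \<in> WW" "\<forall>x\<in>mprod [u1, {omega_inv ^ k}]. PhiF x \<in> WW"
proof -
  have e1: "PhiF (omega ^ k) = omega_inv ^ k" by (simp add: PhiF_power PhiF_omega)
  have e2: "PhiF (omega_inv ^ k) = omega ^ k" by (simp add: PhiF_power PhiF_omega_inv)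
  show "\<forall>x\<in>mprod [u1, {omega ^ k}]. PhiF x \<in> WW" using u1w_pair[of "omega ^ k"] assms e1 by simp
  show "\<forall>x\<in>mprod [u1, {omega_inv ^ k}]. PhiF x \<in> WW" using u1w_pair[of "omega_inv ^ k"] assms e2 by simp
qed

lemma U2_parts: assumes U: "set U2_list \<subseteq> set Xs"
  shows "\<forall>X\<in>set U2_list. \<forall>x\<in>X. PhiF x \<in> WW"
proof -
  have U1: "set U1_list \<subseteq> set Xs" using U by (simp add: U2_list_def)
  have P: "\<And>h. mid h \<in> set U2_list \<Longrightarrow> mid (PhiF h) \<in> set U2_list \<Longrightarrow> \<forall>x\<in>mid h. PhiF x \<in> WW"
    using mid_pair U by blast
  have o2: "\<forall>x\<in>mprod [u1, {omega ^ 2}]. PhiF x \<in> WW" "\<forall>x\<in>mprod [u1, {omega_inv ^ 2}]. PhiF x \<in> WW"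
    using omega_parts[of 2] U by (simp_all add: U2_list_def)
  have "\<forall>X\<in>set [mid (s2i ^ 2 * s1 ^ 2 * s2i * s1 * s2i),
      mid (s2 ^ 2 * s1i ^ 2 * s2 * s1i * s2),
      mid (s2 * s1i ^ 2 * s2 ^ 2 * s1i ^ 2 * s2 ^ 2),
      mid (s2i * s1 ^ 2 * s2i ^ 2 * s1 ^ 2 * s2i ^ 2)]. \<forall>x\<in>X. PhiF x \<in> WW"
    apply (simp only: list.set insert_iff empty_iff ball_simps simp_thms)
    apply (intro conjI)
    apply (rule P; simp add: U2_list_def PhiF_mult PhiF_power; fail)+
    done
  then show ?thesis using U1_parts[OF U1] o2 unfolding U2_list_def by auto
qed

lemma U3_parts: assumes U: "set U3_list \<subseteq> set Xs"
  shows "\<forall>X\<in>set U3_list. \<forall>x\<in>X. PhiF x \<in> WW"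
proof -
  have U2: "set U2_list \<subseteq> set Xs" using U by (simp add: U3_list_def)
  have o: "\<forall>x\<in>mprod [u1, {omega ^ 3}]. PhiF x \<in> WW" "\<forall>x\<in>mprod [u1, {omega_inv ^ 3}]. PhiF x \<in> WW"
    using omega_parts[of 3] U by (simp_all add: U3_list_def)
  then show ?thesis using U2_parts[OF U2] unfolding U3_list_def by auto
qed

lemma U4_parts: assumes U: "set U4_list \<subseteq> set Xs"
  shows "\<forall>X\<in>set U4_list. \<forall>x\<in>X. PhiF x \<in> WW"
proof -
  have U3: "set U3_list \<subseteq> set Xs" using U by (simp add: U4_list_def)
  have o: "\<forall>x\<in>mprod [u1, {omega ^ 4}]. PhiF x \<in> WW" "\<forall>x\<in>mprod [u1, {omega_inv ^ 4}]. PhiF x \<in> WW"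
    using omega_parts[of 4] U by (simp_all add: U4_list_def)
  then show ?thesis using U3_parts[OF U3] unfolding U4_list_def by auto
qed

lemma U5_parts: assumes U: "set U5_list \<subseteq> set Xs"
  shows "\<forall>X\<in>set U5_list. \<forall>x\<in>X. PhiF x \<in> WW"
proof -
  have U4: "set U4_list \<subseteq> set Xs" using U by (simp add: U5_list_def)
  have o: "\<forall>x\<in>mprod [u1, {omega ^ 5}]. PhiF x \<in> WW" "\<forall>x\<in>mprod [u1, {omega_inv ^ 5}]. PhiF x \<in> WW"
    using omega_parts[of 5] U by (simp_all add: U5_list_def)
  then show ?thesis using U4_parts[OF U4] unfolding U5_list_def by auto
qed

end

lemma smod_mprod: "smod (mprod Ys)" by (simp add: mprod_def smod_rspan)
lemma smod_mid: "smod (mid h)" by (simp add: mid_def smod_mprod)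

lemma sm5: "\<forall>X\<in>set U5_list. smod X"
  by (simp add: U5_list_def U4_list_def U3_list_def U2_list_def U1_list_def smod_mprod smod_mid)

lemma sm_sub: "set Ys \<subseteq> set U5_list \<Longrightarrow> \<forall>X\<in>set Ys. smod X"
  using sm5 by blast

lemma subs: "set U1_list \<subseteq> set U5_list" "set U2_list \<subseteq> set U5_list" "set U3_list \<subseteq> set U5_list"
  "set U4_list \<subseteq> set U5_list"
  by (auto simp: U5_list_def U4_list_def U3_list_def U2_list_def)

theorem lemma4p1:
  shows "Phi_stable U1 \<and> Phi_stable U2 \<and> Phi_stable U3 \<and> Phi_stable U4 \<and> Phi_stable U5"
proof (intro conjI)
  show "Phi_stable U1" unfolding U1_def
    using stable_msum[OF sm_sub[OF subs(1)]] U1_parts[OF sm_sub[OF subs(1)] order_refl] by simp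
  show "Phi_stable U2" unfolding U2_def
    using stable_msum[OF sm_sub[OF subs(2)]] U2_parts[OF sm_sub[OF subs(2)] order_refl] by simp
  show "Phi_stable U3" unfolding U3_def
    using stable_msum[OF sm_sub[OF subs(3)]] U3_parts[OF sm_sub[OF subs(3)] order_refl] by simp
  show "Phi_stable U4" unfolding U4_def
    using stable_msum[OF sm_sub[OF subs(4)]] U4_parts[OF sm_sub[OF subs(4)] order_refl] by simp
  show "Phi_stable U5" unfolding U5_def
    using stable_msum[OF sm5] U5_parts[OF sm5 order_refl] by simp
qed


end
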